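(* For all $n>0$ and all $P\in T_{n,0,1}$, $\mathrm{word}(\phi_{n,0,1}(P))=\mathrm{flip}\circ\mathrm{rev}\circ\mathrm{sw}^-_{1,-1}(\mathrm{word}(P))$.
   Context: Words over $\{\mathrm{N},\mathrm{E}\}$ are identified with lattice paths from $(0,0)$ (N = unit north step, E = unit east step); $\mathrm{word}(P)$ is the word of a path $P$. $\mathrm{rev}(w_1\cdots w_n)=w_n\cdots w_1$, and $\mathrm{flip}$ interchanges the letters $\mathrm{N}$ and $\mathrm{E}$. The levels of a word $w=w_1\cdots w_n$ for $\mathrm{sw}^-_{1,-1}$ are $l_0=0$, $l_i=l_{i-1}+1$ if $w_i=\mathrm{N}$, $l_i=l_{i-1}-1$ if $w_i=\mathrm{E}$. $\mathrm{sw}^-_{1,-1}(w)$ is obtained by: for $k=-1,-2,\ldots$ and then $k=\ldots,2,1,0$ (all negative values in decreasing order, then all nonnegative values in decreasing order), scan $w$ from right to left and append each letter $w_i$ ($i\ge1$) with $l_i=k$. $T_{n,0,1}$ is the set of lattice paths from $(0,0)$ to $(n,n)$ with unit north and east steps that never go strictly to the right of the line $x=y$. For $P\in T_{n,0,1}$, its area vector is $g(P)=(g_0,\ldots,g_{n-1})$ where $g_i$ is the number of complete unit squares in the strip $\{x\ge0,\ i\le y\le i+1\}$ lying to the right of $P$ and to the left of the line $x=y$. For $i\ge0$ let $z^{(i)}$ be the subsequence of $g(P)$ of entries in $\{i,i-1\}$, let $M$ be the largest $i$ with $z^{(i)}$ nonempty, and let $\sigma^{(i)}$ be obtained from $z^{(i)}$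 by replacing each $i$ by $\mathrm{N}$ and each $i-1$ by $\mathrm{E}$. Then $\phi_{n,0,1}(P)$ is the path with word $\sigma^{(0)}\sigma^{(1)}\cdots\sigma^{(M)}$. *)

theory Defs
  imports Main
begin

text \<open>Letters N (unit north step) and E (unit east step); a lattice path from (0,0)
 is identified with its word, so word(P) = P.\<close>
datatype step = N | E

definition cnt :: "step \<Rightarrow> step list \<Rightarrow> nat" where
  "cnt a w = length (filter (\<lambda>s. s = a) w)"

definition flip :: "step list \<Rightarrow> step list" where
  "flip w = map (\<lambda>s. case s of N \<Rightarrow> E | E \<Rightarrow> N) w"

text \<open>T_{n,0,1}: paths (0,0) to (n,n) never strictly right of x = y
 (the lattice point after k steps is (cnt E (take k w), cnt N (take k w))).\<close>
definition T01 :: "nat \<Rightarrow> step list set" where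
  "T01 n = {w. cnt N w = n \<and> cnt E w = n \<and>
              (\<forall>k \<le> length w. cnt E (take k w) \<le> cnt N (take k w))}"

definition lev :: "step list \<Rightarrow> nat \<Rightarrow> int" where
  "lev w i = int (cnt N (take i w)) - int (cnt E (take i w))"

definition swblock :: "step list \<Rightarrow> int \<Rightarrow> step list" where
  "swblock w k = map (\<lambda>i. w ! (i - 1))
      (filter (\<lambda>i. lev w i = k) (rev [1..<length w + 1]))"

text \<open>sw^-_{1,-1}: levels -1,-2,... then ..., 2, 1, 0 (levels lie in [-length w, length w]).\<close>
definition sw :: "step list \<Rightarrow> step list" where
  "sw w = concat (map (swblock w) (map (\<lambda>j. - int j) [1..<length w + 1]))
          @ concat (map (swblock w) (map int (rev [0..<length w + 1])))"

text \<open>x-coordinate of the north step of the path in the strip i \<le> y \<le> i+1: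
 number of east steps preceding the (i+1)-th north step.\<close>
definition xrow :: "step list \<Rightarrow> nat \<Rightarrow> nat" where
  "xrow w i = card {k. k < length w \<and> w ! k = E \<and> cnt N (take k w) \<le> i}"

text \<open>g_i: complete unit squares [j,j+1]x[i,i+1] to the right of the path and to the
 left of x = y, i.e. xrow w i \<le> j and j + 1 \<le> i.\<close>
definition area_vec :: "nat \<Rightarrow> step list \<Rightarrow> int list" where
  "area_vec n w = map (\<lambda>i. int (card {j::nat. xrow w i \<le> j \<and> j + 1 \<le> i})) [0..<n]"

definition zseq :: "int list \<Rightarrow> nat \<Rightarrow> int list" where
  "zseq g i = filter (\<lambda>v. v = int i \<or> v = int i - 1) g"

definition sigma :: "int list \<Rightarrow> nat \<Rightarrow> step list" where
  "sigma g i = map (\<lambda>v. if v = int i then N else E) (zseq g i)"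

definition phi :: "nat \<Rightarrow> step list \<Rightarrow> step list" where
  "phi n w = (let g = area_vec n w; M = (GREATEST i. zseq g i \<noteq> [])
              in concat (map (sigma g) [0..<M + 1]))"

end

theory Submission
  imports Defs
begin

definition ht :: "step list \<Rightarrow> int" where
  "ht w = int (cnt N w) - int (cnt E w)"

definition lbk :: "step list \<Rightarrow> int \<Rightarrow> step list" where
  "lbk w k = map (\<lambda>i. w ! (i - 1)) (filter (\<lambda>i. lev w i = k) [1..<length w + 1])"

definition Gs :: "step list \<Rightarrow> int list" where
  "Gs w = map (lev w) (filter (\<lambda>i. w ! i = N) [0..<length w])"

definition sg :: "int list \<Rightarrow> int \<Rightarrow> step list" where
  "sg g k = map (\<lambda>v. if v = k then N else E) (filter (\<lambda>v. v = k \<or> v = k - 1) g)"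

lemma cnt_snoc: "cnt a (w @ [x]) = cnt a w + (if x = a then 1 else 0)"
  by (simp add: cnt_def)

lemma cnt_le: "cnt a w \<le> length w"
  by (simp add: cnt_def)

lemma len_cnt: "length w = cnt N w + cnt E w"
proof (induction w)
  case Nil then show ?case by (simp add: cnt_def)
next
  case (Cons a w) then show ?case by (cases a) (auto simp: cnt_def)
qed

lemma lev_snoc: "i \<le> length w \<Longrightarrow> lev (w @ [x]) i = lev w i"
  by (simp add: lev_def)

lemma lev_len: "lev w (length w) = ht w"
  by (simp add: lev_def ht_def)

lemma lev_len1: "lev (w @ [x]) (Suc (length w)) = ht w + (if x = N then 1 else -1)"
  by (cases x) (simp_all add: lev_def ht_def cnt_snoc)

lemma ht_snoc: "ht (w @ [x]) = ht w + (if x = N then 1 else -1)"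
  by (cases x) (simp_all add: ht_def cnt_snoc)

lemma lev_le: "lev w i \<le> int i"
proof -
  have "cnt N (take i w) \<le> length (take i w)" by (rule cnt_le)
  then show ?thesis by (simp add: lev_def)
qed

lemma lbk_snoc: "lbk (w @ [x]) k = lbk w k @ (if ht (w @ [x]) = k then [x] else [])"
proof -
  have u: "[1..<length (w @ [x]) + 1] = [1..<length w + 1] @ [Suc (length w)]" by simp
  have f: "filter (\<lambda>i. lev (w @ [x]) i = k) [1..<length w + 1] = filter (\<lambda>i. lev w i = k) [1..<length w + 1]"
    by (rule filter_cong) (auto simp: lev_snoc)
  have m: "map (\<lambda>i. (w @ [x]) ! (i - 1)) (filter (\<lambda>i. lev w i = k) [1..<length w + 1])
        = map (\<lambda>i. w ! (i - 1)) (filter (\<lambda>i. lev w i = k) [1..<length w + 1])"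
    by (rule map_cong) (auto simp: nth_append)
  have "lev (w @ [x]) (Suc (length w)) = ht (w @ [x])" using lev_len1 ht_snoc by simp
  then show ?thesis unfolding lbk_def u filter_append map_append f m by simp
qed

lemma Gs_snoc: "Gs (w @ [x]) = Gs w @ (if x = N then [ht w] else [])"
proof -
  have u: "[0..<length (w @ [x])] = [0..<length w] @ [length w]" by simp
  have f: "filter (\<lambda>i. (w @ [x]) ! i = N) [0..<length w] = filter (\<lambda>i. w ! i = N) [0..<length w]"
    by (rule filter_cong) (auto simp: nth_append)
  have m: "map (lev (w @ [x])) (filter (\<lambda>i. w ! i = N) [0..<length w])
        = map (lev w) (filter (\<lambda>i. w ! i = N) [0..<length w])"
    by (rule map_cong) (auto simp: lev_snoc)
  have "lev (w @ [x]) (length w) = ht w" by (simp add: lev_snoc lev_len)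
  then show ?thesis unfolding Gs_def u filter_append map_append f m by (cases x) simp_all
qed

lemma Gs_len: "length (Gs w) = cnt N w"
proof (induction w rule: rev_induct)
  case Nil then show ?case by (simp add: Gs_def cnt_def)
next
  case (snoc x w) then show ?case by (simp add: Gs_snoc cnt_snoc)
qed

lemma xrow_snoc: "xrow (w @ [x]) i = xrow w i + (if x = E \<and> cnt N w \<le> i then 1 else 0)"
proof -
  let ?A = "{k. k < length w \<and> w ! k = E \<and> cnt N (take k w) \<le> i}"
  have eq: "{k. k < length (w @ [x]) \<and> (w @ [x]) ! k = E \<and> cnt N (take k (w @ [x])) \<le> i}
      = ?A \<union> {k. k = length w \<and> x = E \<and> cnt N w \<le> i}"
    by (auto simp: nth_append less_Suc_eq)
  have fin: "finite ?A" by simp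
  show ?thesis
  proof (cases "x = E \<and> cnt N w \<le> i")
    case True
    then have "{k. k = length w \<and> x = E \<and> cnt N w \<le> i} = {length w}" by auto
    then show ?thesis unfolding xrow_def eq using True fin by simp
  next
    case False
    then have emp: "{k. k = length w \<and> x = E \<and> cnt N w \<le> i} = {}" by auto
    show ?thesis unfolding xrow_def eq emp using False by simp
  qed
qed

lemma xrow_full: "cnt N w \<le> i \<Longrightarrow> xrow w i = cnt E w"
proof (induction w rule: rev_induct)
  case Nil then show ?case by (simp add: xrow_def cnt_def)
next
  case (snoc x w)
  then have "cnt N w \<le> i" by (simp add: cnt_snoc split: if_splits)
  with snoc show ?case by (cases x) (simp_all add: xrow_snoc cnt_snoc)
qed

lemma Gs_nth: "i < cnt N w \<Longrightarrow> Gs w ! i = int i - int (xrow w i)"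
proof (induction w rule: rev_induct)
  case Nil then show ?case by (simp add: cnt_def)
next
  case (snoc x w)
  show ?case
  proof (cases x)
    case N
    show ?thesis
    proof (cases "i < cnt N w")
      case True
      then show ?thesis using snoc N by (simp add: Gs_snoc nth_append Gs_len xrow_snoc)
    next
      case False
      then have "i = cnt N w" using snoc N by (simp add: cnt_snoc)
      then show ?thesis using N by (simp add: Gs_snoc nth_append Gs_len xrow_snoc xrow_full ht_def)
    qed
  next
    case E
    then show ?thesis using snoc by (simp add: Gs_snoc xrow_snoc cnt_snoc)
  qed
qed

lemma inv:
  assumes "\<forall>m \<le> length w. lev w m \<ge> 0" and "k \<ge> 0"
  shows "sg (Gs w) k = flip (lbk w k) @ (if k < ht w then [N] else [])"
  using assms(1)
proof (induction w rule: rev_induct)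
  case Nil then show ?case using assms(2) by (simp add: sg_def Gs_def lbk_def flip_def ht_def cnt_def)
next
  case (snoc x w)
  have h: "\<forall>m \<le> length w. lev w m \<ge> 0"
  proof (intro allI impI)
    fix m assume "m \<le> length w"
    then show "lev w m \<ge> 0" using snoc.prems lev_snoc[of m w x] by (metis le_SucI length_append_singleton)
  qed
  have IH: "sg (Gs w) k = flip (lbk w k) @ (if k < ht w then [N] else [])" using snoc.IH h by blast
  have t0: "ht w \<ge> 0" using h lev_len by (metis order_refl)
  have t1: "ht (w @ [x]) \<ge> 0" using snoc.prems lev_len by (metis order_refl length_append_singleton)
  show ?case
  proof (cases x)
    case N
    then show ?thesis using IH assms(2) t0
      by (auto simp: Gs_snoc lbk_snoc sg_def flip_def ht_snoc)
  next
    case E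
    then show ?thesis using IH assms(2) t0 t1
      by (auto simp: Gs_snoc lbk_snoc sg_def flip_def ht_snoc)
  qed
qed

lemma swblock_lbk: "swblock w k = rev (lbk w k)"
  unfolding swblock_def lbk_def by (simp add: rev_map rev_filter)

theorem mainTheorem3:
  fixes n :: nat and P :: "step list"
  assumes "n > 0" and "P \<in> T01 n"
  shows "phi n P = flip (rev (sw P))"
proof -
  define L where "L = length P"
  have cN: "cnt N P = n" and cE: "cnt E P = n"
    and dy: "\<forall>k \<le> length P. cnt E (take k P) \<le> cnt N (take k P)"
    using assms(2) by (auto simp: T01_def)
  have L2: "L = 2 * n" using len_cnt[of P] cN cE L_def by simp
  have ht0: "ht P = 0" using cN cE by (simp add: ht_def)
  have nn: "\<forall>m \<le> length P. lev P m \<ge> 0" using dy by (auto simp: lev_def)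
  have key: "sg (Gs P) (int k) = flip (lbk P (int k))" for k :: nat
    using inv[OF nn, of "int k"] ht0 by simp
  have Gsnn: "v \<ge> 0" if "v \<in> set (Gs P)" for v
    using that nn by (auto simp: Gs_def)
  have gG: "area_vec n P = Gs P"
  proof (rule nth_equalityI)
    show "length (area_vec n P) = length (Gs P)" by (simp add: area_vec_def Gs_len cN)
  next
    fix i assume "i < length (area_vec n P)"
    then have i: "i < n" by (simp add: area_vec_def)
    have gi: "Gs P ! i = int i - int (xrow P i)" using Gs_nth[of i P] i cN by simp
    have "Gs P ! i \<in> set (Gs P)" using i Gs_len[of P] cN by simp
    then have "xrow P i \<le> i" using Gsnn gi by fastforce
    moreover have "{j::nat. xrow P i \<le> j \<and> j + 1 \<le> i} = {xrow P i..<i}" by auto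
    ultimately show "area_vec n P ! i = Gs P ! i" using i gi by (simp add: area_vec_def)
  qed
  define g where "g = area_vec n P"
  have sig: "sigma g k = flip (lbk P (int k))" for k :: nat
    using key[of k] unfolding g_def gG sigma_def zseq_def sg_def by simp
  have zs: "(zseq g k \<noteq> []) = (lbk P (int k) \<noteq> [])" for k :: nat
  proof -
    have "length (sigma g k) = length (zseq g k)" by (simp add: sigma_def)
    then show ?thesis using sig[of k] by (auto simp: flip_def)
  qed
  have bound: "\<forall>y. zseq g y \<noteq> [] \<longrightarrow> y \<le> L"
  proof (intro allI impI)
    fix y assume "zseq g y \<noteq> []"
    then have "lbk P (int y) \<noteq> []" using zs by simp
    then obtain i where "i \<in> set [1..<length P + 1]" "lev P i = int y"
      unfolding lbk_def by (auto simp: filter_empty_conv)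
    then show "y \<le> L" using lev_le[of P i] L_def by auto
  qed
  have z0: "zseq g 0 \<noteq> []"
  proof -
    have "L \<ge> 1" using L2 assms(1) by simp
    then have "L \<in> set [1..<length P + 1]" using L_def by auto
    moreover have "lev P L = 0" using lev_len ht0 L_def by simp
    ultimately have "lbk P 0 \<noteq> []" unfolding lbk_def by (auto simp: filter_empty_conv)
    then show ?thesis using zs[of 0] by simp
  qed
  define M where "M = (GREATEST i. zseq g i \<noteq> [])"
  have hML: "M \<le> L" using GreatestI_nat[of "\<lambda>i. zseq g i \<noteq> []", OF z0] bound M_def by blast
  have big: "sigma g k = []" if "M < k" for k
  proof -
    have "zseq g k = []"
    proof (rule ccontr)
      assume "zseq g k \<noteq> []"
      then have "k \<le> M" unfolding M_def using bound Greatest_le_nat[of "\<lambda>i. zseq g i \<noteq> []" k L] by blast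
      then show False using that by simp
    qed
    then show ?thesis by (simp add: sigma_def)
  qed
  have split: "[0..<L + 1] = [0..<M + 1] @ [M + 1..<L + 1]"
    using hML upt_add_eq_append[of 0 "M + 1" "L - M"] by simp
  have rest: "concat (map (sigma g) [M + 1..<L + 1]) = []"
    using big by auto
  have lhs: "phi n P = concat (map (\<lambda>k. flip (lbk P (int k))) [0..<L + 1])"
  proof -
    have "phi n P = concat (map (sigma g) [0..<M + 1])"
      unfolding phi_def g_def M_def by (simp add: Let_def)
    also have "\<dots> = concat (map (sigma g) [0..<L + 1])"
      using split rest by simp
    also have "\<dots> = concat (map (\<lambda>k. flip (lbk P (int k))) [0..<L + 1])"
      by (rule arg_cong[where f=concat], rule map_cong) (simp_all add: sig)
    finally show ?thesis .
  qed
  have neg: "concat (map (swblock P) (map (\<lambda>j. - int j) [1..<length P + 1])) = []"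
  proof -
    have "swblock P (- int j) = []" if "j \<in> set [1..<length P + 1]" for j
    proof -
      have "\<forall>i \<in> set [1..<length P + 1]. lev P i \<noteq> - int j"
      proof
        fix i assume "i \<in> set [1..<length P + 1]"
        then have "i \<le> length P" by auto
        then have "lev P i \<ge> 0" using nn by blast
        moreover have "j \<ge> 1" using that by auto
        ultimately show "lev P i \<noteq> - int j" by linarith
      qed
      then show ?thesis unfolding swblock_def by (simp add: filter_empty_conv)
    qed
    then show ?thesis by simp
  qed
  have "flip (rev (sw P)) = flip (rev (concat (map (swblock P) (map int (rev [0..<L + 1])))))"
    unfolding sw_def neg L_def by simp
  also have "\<dots> = concat (map (\<lambda>k. flip (lbk P (int k))) [0..<L + 1])"
    by (simp add: rev_concat rev_map swblock_lbk flip_def map_concat comp_def)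
  finally show ?thesis using lhs by simp
qed

end
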